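(* Let $A\in\mathbb Z^{d\times n}$ with $\ker(A)\cap\mathbb N^n=\{0\}$, and let $I(A)\subseteq G(A)$ be the set of $g\in G(A)$ whose distance is not reduced by any element of $D(A)$. If $z\in\ker(A)\setminus G(A)$ is such that no element of $D(A)$ reduces the distance of $z$, then for any decomposition $z=g_1+\dots+g_k$ with $g_i\in G(A)$, $z^+=\sum_i g_i^+$ and $z^-=\sum_i g_i^-$, we have $g_i\in I(A)$ for each $i\in\{1,\dots,k\}$.
   Context: For $z\in\mathbb Z^n$, $z^\pm\in\mathbb N^n$ are the unique vectors with disjoint supports and $z=z^+-z^-$; $\|\cdot\|$ is the $1$-norm; $\le$ is coordinatewise. $G(A)$ is the set of nonzero $z\in\ker(A)$ admitting no decomposition $z=u+v$ with $u,v\in\ker(A)\setminus\{0\}$, $z^+=u^++v^+$, $z^-=u^-+v^-$. A positive (resp. negative) distance decomposition of $z\in\ker(A)$ is $z=u+v$ with $u,v\in\ker(A)\setminus\{0\}$, $u^+\le z^+$ (resp. $u^-\le z^-$), $\|v\|<\|z\|$; $D(A)$ is the set of nonzero $z\in\ker(A)$ admitting neither a positive nor a negative distance decomposition. For nonzero $w\in\ker(A)$, $u\in\ker(A)$ reduces the distance of $w$ if there exist $(p,q)\in\{(w^+,w^-),(w^-,w^+)\}$ and $\varepsilon\in\{\pm1\}$ with $p+\varepsilon u\in\mathbb N^n$ and $\|p+\varepsilon u-q\|<\|w\|$. *)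

theory Defs
  imports "HOL-Analysis.Finite_Cartesian_Product"
begin

text \<open>Integer vectors in Z^n are modelled as int^'n (n = CARD('n)), an integer
d x n matrix as int^'n^'d.\<close>

definition kerA :: "int^'n^'d \<Rightarrow> (int^'n) set" where
  "kerA A = {z. A *v z = 0}"

definition posp :: "int^'n \<Rightarrow> int^'n" where
  "posp z = (\<chi> i. max (z$i) 0)"

definition negp :: "int^'n \<Rightarrow> int^'n" where
  "negp z = (\<chi> i. max (- (z$i)) 0)"

definition norm1 :: "int^'n \<Rightarrow> int" where
  "norm1 z = (\<Sum>i\<in>UNIV. \<bar>z$i\<bar>)"

definition natvec :: "int^'n \<Rightarrow> bool" where
  "natvec z \<longleftrightarrow> (\<forall>i. 0 \<le> z$i)"

definition cwle :: "int^'n \<Rightarrow> int^'n \<Rightarrow> bool" where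
  "cwle u v \<longleftrightarrow> (\<forall>i. u$i \<le> v$i)"

definition GA :: "int^'n^'d \<Rightarrow> (int^'n) set" where
  "GA A = {z. z \<in> kerA A \<and> z \<noteq> 0 \<and>
     \<not> (\<exists>u v. u \<in> kerA A \<and> v \<in> kerA A \<and> u \<noteq> 0 \<and> v \<noteq> 0 \<and> z = u + v \<and>
            posp z = posp u + posp v \<and> negp z = negp u + negp v)}"

definition pos_dist_decomp :: "int^'n^'d \<Rightarrow> int^'n \<Rightarrow> int^'n \<Rightarrow> int^'n \<Rightarrow> bool" where
  "pos_dist_decomp A z u v \<longleftrightarrow> z = u + v \<and> u \<in> kerA A \<and> v \<in> kerA A \<and> u \<noteq> 0 \<and> v \<noteq> 0 \<and>
     cwle (posp u) (posp z) \<and> norm1 v < norm1 z"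

definition neg_dist_decomp :: "int^'n^'d \<Rightarrow> int^'n \<Rightarrow> int^'n \<Rightarrow> int^'n \<Rightarrow> bool" where
  "neg_dist_decomp A z u v \<longleftrightarrow> z = u + v \<and> u \<in> kerA A \<and> v \<in> kerA A \<and> u \<noteq> 0 \<and> v \<noteq> 0 \<and>
     cwle (negp u) (negp z) \<and> norm1 v < norm1 z"

definition DA :: "int^'n^'d \<Rightarrow> (int^'n) set" where
  "DA A = {z. z \<in> kerA A \<and> z \<noteq> 0 \<and>
     \<not> (\<exists>u v. pos_dist_decomp A z u v) \<and> \<not> (\<exists>u v. neg_dist_decomp A z u v)}"

definition reduces_dist :: "int^'n^'d \<Rightarrow> int^'n \<Rightarrow> int^'n \<Rightarrow> bool" where
  "reduces_dist A u w \<longleftrightarrow> w \<in> kerA A \<and> w \<noteq> 0 \<and> u \<in> kerA A \<and>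
     (\<exists>(p, q) \<in> {(posp w, negp w), (negp w, posp w)}. \<exists>\<epsilon> \<in> {1, -1::int}.
        natvec (p + \<epsilon> *s u) \<and> norm1 (p + \<epsilon> *s u - q) < norm1 w)"

definition IA :: "int^'n^'d \<Rightarrow> (int^'n) set" where
  "IA A = {g \<in> GA A. \<not> (\<exists>u \<in> DA A. reduces_dist A u g)}"

end

theory Submission
  imports Defs
begin

lemma n1_add: "norm1 (a + b) \<le> norm1 a + norm1 (b::int^'n)"
  unfolding norm1_def by (simp add: sum.distrib[symmetric] sum_mono abs_triangle_ineq)

lemma n1_sum: "finite S \<Longrightarrow> norm1 (sum f S) \<le> (\<Sum>j\<in>S. norm1 (f j :: int^'n))"
proof (induction S rule: finite_induct)
  case empty then show ?case by (simp add: norm1_def)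
next
  case (insert x F)
  then show ?case using n1_add[of "f x" "sum f F"] by simp
qed

lemma n1_neg: "norm1 (- a) = norm1 (a::int^'n)"
  unfolding norm1_def by simp

lemma pn: "posp a - negp a = (a::int^'n)"
  unfolding posp_def negp_def by (simp add: vec_eq_iff max_def)

lemma nat_add: "natvec a \<Longrightarrow> natvec b \<Longrightarrow> natvec (a + (b::int^'n))"
  unfolding natvec_def by simp

lemma nat_sum: "natvec (\<Sum>j\<in>S. posp (f j) :: int^'n)"
  unfolding natvec_def posp_def by (simp add: sum_component sum_nonneg)

lemma nat_sumn: "natvec (\<Sum>j\<in>S. negp (f j) :: int^'n)"
  unfolding natvec_def negp_def by (simp add: sum_component sum_nonneg)

definition ssum :: "int^'n \<Rightarrow> int" where "ssum v = (\<Sum>i\<in>UNIV. v$i)"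

lemma n1_ss: "norm1 a = ssum (posp a) + ssum (negp (a::int^'n))"
  unfolding norm1_def ssum_def posp_def negp_def
  by (simp add: sum.distrib[symmetric]) (rule sum.cong, auto)

lemma ss_sum: "ssum (sum f S) = (\<Sum>j\<in>S. ssum (f j :: int^'n))"
  unfolding ssum_def by (simp add: sum_component sum.swap[of _ UNIV])

theorem proposition8p11:
  fixes A :: "int^'n^'d" and z :: "int^'n" and g :: "nat \<Rightarrow> int^'n" and k :: nat
  assumes "\<forall>x \<in> kerA A. natvec x \<longrightarrow> x = 0"
    and "z \<in> kerA A" and "z \<notin> GA A"
    and "\<not> (\<exists>u \<in> DA A. reduces_dist A u z)"
    and "\<forall>i \<in> {1..k}. g i \<in> GA A"
    and "z = (\<Sum>i = 1..k. g i)"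
    and "posp z = (\<Sum>i = 1..k. posp (g i))"
    and "negp z = (\<Sum>i = 1..k. negp (g i))"
  shows "\<forall>i \<in> {1..k}. g i \<in> IA A"
proof
  fix i assume iS: "i \<in> {1..k}"
  define S where "S = {1..k} - {i}"
  define R where "R = (\<Sum>j\<in>S. g j)"
  define RP where "RP = (\<Sum>j\<in>S. posp (g j))"
  define RN where "RN = (\<Sum>j\<in>S. negp (g j))"
  have fS: "finite S" unfolding S_def by simp
  have zR: "z = g i + R" unfolding R_def S_def using assms(6) iS sum.remove[of "{1..k}" i g]
    by simp
  have zP: "posp z = posp (g i) + RP" unfolding RP_def S_def using assms(7) iS sum.remove[of "{1..k}" i "\<lambda>j. posp (g j)"]
    by simp
  have zN: "negp z = negp (g i) + RN" unfolding RN_def S_def using assms(8) iS sum.remove[of "{1..k}" i "\<lambda>j. negp (g j)"]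
    by simp
  have RPN: "RP - RN = R" unfolding RP_def RN_def R_def
    by (simp add: sum_subtractf[symmetric] pn)
  have nz: "norm1 z = norm1 (g i) + (\<Sum>j\<in>S. norm1 (g j))"
  proof -
    have "norm1 z = (\<Sum>j\<in>{1..k}. norm1 (g j))"
      unfolding n1_ss assms(7) assms(8) ss_sum by (simp add: sum.distrib)
    then show ?thesis unfolding S_def using iS sum.remove[of "{1..k}" i "\<lambda>j. norm1 (g j)"] by simp
  qed
  have nR: "norm1 R \<le> (\<Sum>j\<in>S. norm1 (g j))" unfolding R_def using n1_sum[OF fS] .
  have gG: "g i \<in> GA A" using assms(5) iS by blast
  show "g i \<in> IA A"
    unfolding IA_def
  proof (intro CollectI conjI gG notI)
    assume "\<exists>u\<in>DA A. reduces_dist A u (g i)"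
    then obtain u where uD: "u \<in> DA A" and r: "reduces_dist A u (g i)" by blast
    have uk: "u \<in> kerA A" using r unfolding reduces_dist_def by blast
    from r obtain p q \<epsilon> where pq: "(p, q) \<in> {(posp (g i), negp (g i)), (negp (g i), posp (g i))}"
      and e: "\<epsilon> \<in> {1, -1::int}" and nv: "natvec (p + \<epsilon> *s u)"
      and lt: "norm1 (p + \<epsilon> *s u - q) < norm1 (g i)"
      unfolding reduces_dist_def by blast
    have "reduces_dist A u z"
    proof -
      have ex: "\<exists>(p, q) \<in> {(posp z, negp z), (negp z, posp z)}. \<exists>\<epsilon> \<in> {1, -1::int}.
        natvec (p + \<epsilon> *s u) \<and> norm1 (p + \<epsilon> *s u - q) < norm1 z"
      proof (cases "p = posp (g i) \<and> q = negp (g i)")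
        case True
        have a: "natvec (posp z + \<epsilon> *s u)"
          using nat_add[OF nv[unfolded True[THEN conjunct1]] nat_sum[of g S]]
          unfolding zP RP_def by (simp add: algebra_simps)
        have "posp z + \<epsilon> *s u - negp z = (p + \<epsilon> *s u - q) + R"
          using True zP zN RPN by (simp add: algebra_simps)
        then have "norm1 (posp z + \<epsilon> *s u - negp z) < norm1 z"
          unfolding \<open>posp z + \<epsilon> *s u - negp z = (p + \<epsilon> *s u - q) + R\<close> using n1_add[of "p + \<epsilon> *s u - q" R] lt nR nz by linarith
        then show ?thesis using a e by blast
      next
        case False
        then have T: "p = negp (g i) \<and> q = posp (g i)" using pq by auto
        have a: "natvec (negp z + \<epsilon> *s u)"
          using nat_add[OF nv[unfolded T[THEN conjunct1]] nat_sumn[of g S]]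
          unfolding zN RN_def by (simp add: algebra_simps)
        have "negp z + \<epsilon> *s u - posp z = (p + \<epsilon> *s u - q) + (- R)"
          using T zP zN RPN by (simp add: algebra_simps)
        then have "norm1 (negp z + \<epsilon> *s u - posp z) < norm1 z"
          unfolding \<open>negp z + \<epsilon> *s u - posp z = (p + \<epsilon> *s u - q) + (- R)\<close> using n1_add[of "p + \<epsilon> *s u - q" "-R"] lt nR nz n1_neg[of R] by linarith
        then show ?thesis using a e by blast
      qed
      have "z \<noteq> 0"
      proof
        assume "z = 0"
        then have "norm1 z = 0" by (simp add: norm1_def)
        moreover have "0 \<le> norm1 (p + \<epsilon> *s u - q)" unfolding norm1_def by (simp add: sum_nonneg)
        moreover have "0 \<le> norm1 (g j)" for j unfolding norm1_def by (simp add: sum_nonneg)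
        moreover have "0 \<le> (\<Sum>j\<in>S. norm1 (g j))" by (rule sum_nonneg) (use calculation in blast)
        ultimately show False using lt nz by linarith
      qed
      then show ?thesis unfolding reduces_dist_def using assms(2) uk ex by blast
    qed
    then show False using assms(4) uD by blast
  qed
qed

end
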